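(* For each $n\in\mathbb{N}_0$ and $m=1,\ldots,n+1$ (with products taken in $\mathbb{H}$), \begin{align*} \mathbf{X}^{0,\dagger}_n&=\tfrac{1}{n+2}\big(\mathbf{X}^{1,\dagger}_n\mathbf{e}_1+\mathbf{Y}^{1,\dagger}_n\mathbf{e}_2\big),\\ \mathbf{X}^{m,\dagger}_n&=-\tfrac{n+m+1}{2}\big(\mathbf{X}^{m-1,\dagger}_n\mathbf{e}_1-\mathbf{Y}^{m-1,\dagger}_n\mathbf{e}_2\big)+\tfrac{1}{2(n+m+2)}\big(\mathbf{X}^{m+1,\dagger}_n\mathbf{e}_1+\mathbf{Y}^{m+1,\dagger}_n\mathbf{e}_2\big),\\ \mathbf{Y}^{m,\dagger}_n&=-\tfrac{n+m+1}{2}\big(\mathbf{Y}^{m-1,\dagger}_n\mathbf{e}_1+\mathbf{X}^{m-1,\dagger}_n\mathbf{e}_2\big)+\tfrac{1}{2(n+m+2)}\big(\mathbf{Y}^{m+1,\dagger}_n\mathbf{e}_1-\mathbf{X}^{m+1,\dagger}_n\mathbf{e}_2\big), \end{align*} where $\mathbf{X}^{m,\dagger}_n=\mathbf{Y}^{m,\dagger}_n:=0$ for $m\ge n+2$ and $\mathbf{Y}^{0,\dagger}_n:=0$; moreover $\mathbf{X}^{0,\dagger}_0=\tfrac12=\mathbf{X}^{1,\dagger}_0\mathbf{e}_1=\mathbf{Y}^{1,\dagger}_0\mathbf{e}_2$.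
   Context: Quaternions $\mathbb{H}$ have basis $1,\mathbf{e}_1,\mathbf{e}_2,\mathbf{e}_3$ with $\mathbf{e}_i^2=-1$, $\mathbf{e}_1\mathbf{e}_2=\mathbf{e}_3=-\mathbf{e}_2\mathbf{e}_1$, $\mathbf{e}_2\mathbf{e}_3=\mathbf{e}_1=-\mathbf{e}_3\mathbf{e}_2$, $\mathbf{e}_3\mathbf{e}_1=\mathbf{e}_2=-\mathbf{e}_1\mathbf{e}_3$. Reduced quaternions: $\mathcal{A}=\mathrm{span}_\mathbb{R}\{1,\mathbf{e}_1,\mathbf{e}_2\}$; $x=(x_0,x_1,x_2)\in\mathbb{R}^3$ is identified with $x_0+x_1\mathbf{e}_1+x_2\mathbf{e}_2$. $\overline{D}=\partial_{x_0}-\mathbf{e}_1\partial_{x_1}-\mathbf{e}_2\partial_{x_2}$. Spherical coordinates: $x_0=r\cos\theta_1$, $x_1=r\sin\theta_1\cos\theta_2$, $x_2=r\sin\theta_1\sin\theta_2$. $P^m_n(t)=(1-t^2)^{m/2}\frac{d^m}{dt^m}P_n(t)$ is the associated Legendre function ($P_n$ the Legendre polynomial), $T_k,U_k$ the Chebyshev polynomials of first and second kind. Spherical harmonics: $U^l_{n}=P^l_{n}(\cos\theta_1)T_l(\cos\theta_2)$, $V^m_{n}=P^m_{n}(\cos\theta_1)\sin\theta_2\,U_{m-1}(\cos\theta_2)$. Basis polynomials: $\mathbf{X}^{l,\dagger}_n:=\tfrac12\overline{D}\big(r^{n+1}U^l_{n+1}\big)$, $l=0,\ldots,n+1$, and $\mathbf{Y}^{m,\dagger}_n:=\tfrac12\overline{D}\big(r^{n+1}V^m_{n+1}\big)$,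 $m=1,\ldots,n+1$. *)

theory Defs
  imports "HOL-Analysis.Analysis" "HOL-Computational_Algebra.Polynomial"
begin

datatype quat = Quat (qre: real) (qi1: real) (qi2: real) (qi3: real)

instantiation quat :: "{zero, one, plus, minus, uminus, times}"
begin
definition "0 = Quat 0 0 0 0"
definition "1 = Quat 1 0 0 0"
definition "p + q = Quat (qre p + qre q) (qi1 p + qi1 q) (qi2 p + qi2 q) (qi3 p + qi3 q)"
definition "p - q = Quat (qre p - qre q) (qi1 p - qi1 q) (qi2 p - qi2 q) (qi3 p - qi3 q)"
definition "- p = Quat (- qre p) (- qi1 p) (- qi2 p) (- qi3 p)"
definition "p * q = Quat
   (qre p * qre q - qi1 p * qi1 q - qi2 p * qi2 q - qi3 p * qi3 q)
   (qre p * qi1 q + qi1 p * qre q + qi2 p * qi3 q - qi3 p * qi2 q)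
   (qre p * qi2 q - qi1 p * qi3 q + qi2 p * qre q + qi3 p * qi1 q)
   (qre p * qi3 q + qi1 p * qi2 q - qi2 p * qi1 q + qi3 p * qre q)"
instance ..
end

definition qreal :: "real \<Rightarrow> quat" where "qreal c = Quat c 0 0 0"
definition e1 :: quat where "e1 = Quat 0 1 0 0"
definition e2 :: quat where "e2 = Quat 0 0 1 0"

definition legendre :: "nat \<Rightarrow> real poly" where
  "legendre n = smult (1 / (2 ^ n * fact n)) ((pderiv ^^ n) ([:-1, 0, 1:] ^ n))"

definition assoc_legendre :: "nat \<Rightarrow> nat \<Rightarrow> real \<Rightarrow> real" where
  "assoc_legendre m n t = sqrt (1 - t\<^sup>2) ^ m * poly ((pderiv ^^ m) (legendre n)) t"

fun chebT :: "nat \<Rightarrow> real \<Rightarrow> real" where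
  "chebT 0 t = 1"
| "chebT (Suc 0) t = t"
| "chebT (Suc (Suc k)) t = 2 * t * chebT (Suc k) t - chebT k t"

fun chebU :: "nat \<Rightarrow> real \<Rightarrow> real" where
  "chebU 0 t = 1"
| "chebU (Suc 0) t = 2 * t"
| "chebU (Suc (Suc k)) t = 2 * t * chebU (Suc k) t - chebU k t"

section \<open>Spherical coordinates on R^3 = span{1,e1,e2}\<close>

type_synonym pt = "real \<times> real \<times> real"

definition sph_r :: "pt \<Rightarrow> real" where
  "sph_r x = (case x of (x0, x1, x2) \<Rightarrow> sqrt (x0\<^sup>2 + x1\<^sup>2 + x2\<^sup>2))"
definition sph_rho :: "pt \<Rightarrow> real" where
  "sph_rho x = (case x of (x0, x1, x2) \<Rightarrow> sqrt (x1\<^sup>2 + x2\<^sup>2))"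
definition cos_th1 :: "pt \<Rightarrow> real" where
  "cos_th1 x = (case x of (x0, x1, x2) \<Rightarrow> x0 / sph_r x)"
definition cos_th2 :: "pt \<Rightarrow> real" where
  "cos_th2 x = (case x of (x0, x1, x2) \<Rightarrow> x1 / sph_rho x)"
definition sin_th2 :: "pt \<Rightarrow> real" where
  "sin_th2 x = (case x of (x0, x1, x2) \<Rightarrow> x2 / sph_rho x)"

definition harmU :: "nat \<Rightarrow> nat \<Rightarrow> pt \<Rightarrow> real" where
  "harmU l n x = assoc_legendre l n (cos_th1 x) * chebT l (cos_th2 x)"
definition harmV :: "nat \<Rightarrow> nat \<Rightarrow> pt \<Rightarrow> real" where
  "harmV m n x = assoc_legendre m n (cos_th1 x) * sin_th2 x * chebU (m - 1) (cos_th2 x)"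

definition pd0 :: "(pt \<Rightarrow> real) \<Rightarrow> pt \<Rightarrow> real" where
  "pd0 f x = (case x of (x0, x1, x2) \<Rightarrow> deriv (\<lambda>t. f (t, x1, x2)) x0)"
definition pd1 :: "(pt \<Rightarrow> real) \<Rightarrow> pt \<Rightarrow> real" where
  "pd1 f x = (case x of (x0, x1, x2) \<Rightarrow> deriv (\<lambda>t. f (x0, t, x2)) x1)"
definition pd2 :: "(pt \<Rightarrow> real) \<Rightarrow> pt \<Rightarrow> real" where
  "pd2 f x = (case x of (x0, x1, x2) \<Rightarrow> deriv (\<lambda>t. f (x0, x1, t)) x2)"

definition Dbar :: "(pt \<Rightarrow> real) \<Rightarrow> pt \<Rightarrow> quat" where
  "Dbar f x = qreal (pd0 f x) - e1 * qreal (pd1 f x) - e2 * qreal (pd2 f x)"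

definition Xdag :: "nat \<Rightarrow> nat \<Rightarrow> pt \<Rightarrow> quat" where
  "Xdag l n x = qreal (1/2) * Dbar (\<lambda>y. sph_r y ^ (n + 1) * harmU l (n + 1) y) x"
definition Ydag :: "nat \<Rightarrow> nat \<Rightarrow> pt \<Rightarrow> quat" where
  "Ydag m n x = qreal (1/2) * Dbar (\<lambda>y. sph_r y ^ (n + 1) * harmV m (n + 1) y) x"

definition Xc :: "nat \<Rightarrow> nat \<Rightarrow> pt \<Rightarrow> quat" where
  "Xc l n x = (if l \<le> n + 1 then Xdag l n x else 0)"
definition Yc :: "nat \<Rightarrow> nat \<Rightarrow> pt \<Rightarrow> quat" where
  "Yc m n x = (if 1 \<le> m \<and> m \<le> n + 1 then Ydag m n x else 0)"

end

theory Submission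
  imports Defs
begin


definition qN :: "nat \<Rightarrow> real poly" where "qN N = [:-1,0,1:] ^ N"
definition ev :: "nat \<Rightarrow> nat \<Rightarrow> real \<Rightarrow> real" where "ev N j t = poly ((pderiv^^j) (qN N)) t"

lemma ode_base: "[:-1,0,1:] * pderiv (qN N) = smult (2 * real N) ([:0,1:] * qN N)"
proof (cases N)
  case 0 then show ?thesis by (simp add: qN_def)
next
  case (Suc M)
  have "pderiv [:-1,0,(1::real):] = [:0,2:]" by (simp add: pderiv_pCons)
  then show ?thesis unfolding qN_def Suc pderiv_power_Suc
    by (simp add: algebra_simps)
qed

lemma ev_deriv: "((\<lambda>t. ev N j t) has_real_derivative ev N (Suc j) t) (at t)"
  unfolding ev_def by (simp add: poly_DERIV)

lemma zero_deriv_eq: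
  assumes "\<And>t. f t = (0::real)" "(f has_real_derivative D) (at t)" shows "D = 0"
proof -
  have "f = (\<lambda>t. 0)" using assms(1) by auto
  then have "(f has_real_derivative 0) (at t)" by simp
  then show ?thesis using assms(2) DERIV_unique by blast
qed

lemma ode_ev0: "(t^2 - 1) * ev N 1 t = 2 * real N * t * ev N 0 t"
proof -
  have "poly ([:-1,0,1:] * pderiv (qN N)) t = poly (smult (2 * real N) ([:0,1:] * qN N)) t"
    using ode_base by simp
  then show ?thesis by (simp add: ev_def power2_eq_square algebra_simps)
qed

lemma ode_gen: "(t^2 - 1) * ev N (k+2) t + 2*(real k + 1 - real N) * t * ev N (k+1) t
   + ((real k + 1) * real k - 2 * real N * (real k + 1)) * ev N k t = 0"
proof (induction k arbitrary: t)
  case 0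
  have "((\<lambda>t. (t^2 - 1) * ev N 1 t - 2 * real N * t * ev N 0 t) has_real_derivative
     (2*t * ev N 1 t + (t^2 - 1) * ev N 2 t - 2 * real N * ev N 0 t - 2 * real N * t * ev N 1 t)) (at t)"
    by (auto intro!: derivative_eq_intros ev_deriv simp: numeral_2_eq_2)
  from zero_deriv_eq[OF _ this] ode_ev0 show ?case by (simp add: algebra_simps numeral_2_eq_2)
next
  case (Suc k)
  have "((\<lambda>t. (t^2 - 1) * ev N (k+2) t + 2*(real k + 1 - real N) * t * ev N (k+1) t
   + ((real k + 1) * real k - 2 * real N * (real k + 1)) * ev N k t) has_real_derivative
     (2*t * ev N (k+2) t + (t^2 - 1) * ev N (Suc (Suc (Suc k))) t + 2*(real k + 1 - real N) * ev N (k+1) t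
      + 2*(real k + 1 - real N) * t * ev N (k+2) t
   + ((real k + 1) * real k - 2 * real N * (real k + 1)) * ev N (k+1) t)) (at t)"
    by (auto intro!: derivative_eq_intros ev_deriv simp: numeral_2_eq_2 numeral_3_eq_3)
  from zero_deriv_eq[OF _ this] Suc.IH show ?case by (simp add: algebra_simps)
qed



primrec CS :: "nat \<Rightarrow> real \<Rightarrow> real \<Rightarrow> real \<times> real" where
  "CS 0 u v = (1, 0)"
| "CS (Suc l) u v = (u * fst (CS l u v) - v * snd (CS l u v), u * snd (CS l u v) + v * fst (CS l u v))"

definition Cf where "Cf l u v = fst (CS l u v)"
definition Sf where "Sf l u v = snd (CS l u v)"

lemma Cf_0[simp]: "Cf 0 u v = 1" and Sf_0[simp]: "Sf 0 u v = 0"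
  and Cf_Suc: "Cf (Suc l) u v = u * Cf l u v - v * Sf l u v"
  and Sf_Suc: "Sf (Suc l) u v = u * Sf l u v + v * Cf l u v"
  by (simp_all add: Cf_def Sf_def)

lemma Cf_rec2: "Cf (Suc (Suc l)) u v = 2 * u * Cf (Suc l) u v - (u^2+v^2) * Cf l u v"
  by (simp add: Cf_Suc Sf_Suc power2_eq_square algebra_simps)
lemma Sf_rec2: "Sf (Suc (Suc l)) u v = 2 * u * Sf (Suc l) u v - (u^2+v^2) * Sf l u v"
  by (simp add: Cf_Suc Sf_Suc power2_eq_square algebra_simps)

lemma chebT_Cf:
  assumes "sqrt (u^2+v^2) > 0"
  shows "sqrt (u^2+v^2) ^ l * chebT l (u / sqrt (u^2+v^2)) = Cf l u v"
proof -
  define \<rho> where "\<rho> = sqrt (u^2+v^2)"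
  have r2: "\<rho>^2 = u^2+v^2" unfolding \<rho>_def by simp
  have p: "\<rho>>0" using assms \<rho>_def by simp
  have "\<rho> ^ l * chebT l (u / \<rho>) = Cf l u v \<and> \<rho> ^ Suc l * chebT (Suc l) (u / \<rho>) = Cf (Suc l) u v"
  proof (induction l)
    case 0 then show ?case using p by (simp add: Cf_Suc)
  next
    case (Suc k)
    have "\<rho> ^ Suc (Suc k) * chebT (Suc (Suc k)) (u / \<rho>)
      = 2 * u * (\<rho> ^ Suc k * chebT (Suc k) (u / \<rho>)) - \<rho>^2 * (\<rho>^k * chebT k (u / \<rho>))"
      using p by (simp add: field_simps power2_eq_square)
    then show ?case using Suc r2 by (simp add: Cf_rec2)
  qed
  then show ?thesis unfolding \<rho>_def by simp
qed

lemma chebU_Sf: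
  assumes "sqrt (u^2+v^2) > 0"
  shows "sqrt (u^2+v^2) ^ Suc l * (v / sqrt (u^2+v^2)) * chebU l (u / sqrt (u^2+v^2)) = Sf (Suc l) u v"
proof -
  define \<rho> where "\<rho> = sqrt (u^2+v^2)"
  have r2: "\<rho>^2 = u^2+v^2" unfolding \<rho>_def by simp
  have p: "\<rho>>0" using assms \<rho>_def by simp
  have "\<rho> ^ Suc l * (v/\<rho>) * chebU l (u / \<rho>) = Sf (Suc l) u v \<and> \<rho> ^ Suc (Suc l) * (v/\<rho>) * chebU (Suc l) (u / \<rho>) = Sf (Suc (Suc l)) u v"
  proof (induction l)
    case 0 then show ?case using p by (simp add: Sf_Suc Cf_Suc field_simps power2_eq_square)
  next
    case (Suc k)
    have "\<rho> ^ Suc (Suc (Suc k)) * (v/\<rho>) * chebU (Suc (Suc k)) (u / \<rho>)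
      = 2 * u * (\<rho> ^ Suc (Suc k) * (v/\<rho>) * chebU (Suc k) (u / \<rho>)) - \<rho>^2 * (\<rho>^Suc k * (v/\<rho>) * chebU k (u / \<rho>))"
      using p by (simp add: field_simps power2_eq_square)
    then show ?case using Suc r2 by (simp add: Sf_rec2)
  qed
  then show ?thesis unfolding \<rho>_def by simp
qed

lemma Cf_Sf_deriv:
  "((\<lambda>t. Cf l t v) has_real_derivative real l * Cf (l-1) u v) (at u)
   \<and> ((\<lambda>t. Sf l t v) has_real_derivative real l * Sf (l-1) u v) (at u)
   \<and> ((\<lambda>t. Cf l u t) has_real_derivative - real l * Sf (l-1) u v) (at v)
   \<and> ((\<lambda>t. Sf l u t) has_real_derivative real l * Cf (l-1) u v) (at v)"
proof (induction l)
  case 0 then show ?case by simp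
next
  case (Suc l)
  have h: "real l * Cf (l - 1) u v * u - v * (real l * Sf (l - 1) u v) = real l * Cf l u v"
          "real l * Sf (l - 1) u v * u + v * (real l * Cf (l - 1) u v) = real l * Sf l u v"
    by (cases l; simp add: Cf_Suc Sf_Suc algebra_simps)+
  show ?case unfolding Cf_Suc Sf_Suc using Suc.IH
    apply (intro conjI)
    apply (auto intro!: derivative_eq_intros)
    using h by (auto simp: algebra_simps)
qed



definition PL :: "nat \<Rightarrow> nat \<Rightarrow> real \<Rightarrow> real" where
  "PL N l t = poly ((pderiv^^l) (legendre N)) t"

lemma funpow_pderiv_smult: "(pderiv^^l) (smult c p) = smult c ((pderiv^^l) p)"
  by (induction l) (simp_all add: pderiv_smult)

lemma PL_ev: "PL N l t = (1/(2^N * fact N)) * ev N (l+N) t"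
  unfolding PL_def ev_def legendre_def qN_def
  by (simp add: funpow_pderiv_smult funpow_add)

lemma PL_ode: "(1 - t^2) * PL N (l+2) t - 2 * (real l + 1) * t * PL N (l+1) t
   + (real N - real l) * (real N + real l + 1) * PL N l t = 0"
proof -
  define c :: real where "c = 1/(2^N * fact N)"
  have e: "(t^2 - 1) * ev N (l+N+2) t + 2*(real (l+N) + 1 - real N) * t * ev N (l+N+1) t
   + ((real (l+N) + 1) * real (l+N) - 2 * real N * (real (l+N) + 1)) * ev N (l+N) t = 0"
    using ode_gen[of t N "l+N"] by simp
  have "(1 - t^2) * PL N (l+2) t - 2 * (real l + 1) * t * PL N (l+1) t
   + (real N - real l) * (real N + real l + 1) * PL N l t
   = - c * ((t^2 - 1) * ev N (l+N+2) t + 2*(real (l+N) + 1 - real N) * t * ev N (l+N+1) t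
   + ((real (l+N) + 1) * real (l+N) - 2 * real N * (real (l+N) + 1)) * ev N (l+N) t)"
    unfolding PL_ev c_def[symmetric] by (simp add: algebra_simps add_ac)
  then show ?thesis using e by simp
qed

lemma degree_funpow_pderiv: "degree ((pderiv^^k) (p::real poly)) = degree p - k"
  by (induction k) (simp_all add: degree_pderiv)

lemma funpow_pderiv_zero: assumes "k > degree (p::real poly)" shows "(pderiv^^k) p = 0"
proof -
  obtain j where k: "k = Suc (degree p + j)" using assms by (metis less_iff_Suc_add)
  have "degree ((pderiv^^degree p) p) = 0" by (simp add: degree_funpow_pderiv)
  then have "(pderiv^^Suc (degree p)) p = 0" by (simp add: pderiv_eq_0_iff)
  moreover have "(pderiv^^(j + Suc (degree p))) p = (pderiv^^j) ((pderiv^^Suc (degree p)) p)"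
    by (simp only: funpow_add o_def)
  moreover have "(pderiv^^j) (0::real poly) = 0" by (induction j) simp_all
  ultimately show ?thesis using k by (simp add: add.commute)
qed

lemma PL_zero: assumes "l > N" shows "PL N l t = 0"
proof -
  have "degree (qN N) \<le> 2 * N" unfolding qN_def
    using degree_power_le[of "[:-1,0,1::real:]" N] by simp
  then have "(pderiv^^(l+N)) (qN N) = 0" using assms by (intro funpow_pderiv_zero) simp
  then show ?thesis by (simp add: PL_ev ev_def)
qed



definition rr :: "real \<Rightarrow> real \<Rightarrow> real \<Rightarrow> real" where "rr a b c = sqrt (a^2+b^2+c^2)"
definition Qf :: "nat \<Rightarrow> nat \<Rightarrow> real \<Rightarrow> real" where "Qf N l r = r^N / r^l"
definition Wf where "Wf N l a b c = Qf N l (rr a b c) * PL N l (a / rr a b c)"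

definition Af where "Af N l a b c = (let r = rr a b c; t = a / r in
   Qf N l r / r * ((real N - real l) * t * PL N l t + (1 - t^2) * PL N (Suc l) t))"
definition Bf where "Bf N l a b c = (let r = rr a b c; t = a / r in
   Qf N l r / r^2 * ((real N - real l) * PL N l t - t * PL N (Suc l) t))"
definition Kf where "Kf N l a b c = (let r = rr a b c; t = a / r in Qf N l r * PL N l t)"

lemma PL_deriv[derivative_intros]:
  "(f has_real_derivative f') (at x) \<Longrightarrow> ((\<lambda>x. PL N l (f x)) has_real_derivative f' * PL N (Suc l) (f x)) (at x)"
  unfolding PL_def by (auto intro!: derivative_eq_intros)

lemma Qf_deriv:
  assumes "(f has_real_derivative f') (at x)" "f x > 0"
  shows "((\<lambda>x. Qf N l (f x)) has_real_derivative (real N - real l) * Qf N l (f x) / f x * f') (at x)"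
proof -
  have "((\<lambda>x. f x ^ N / f x ^ l) has_real_derivative
     ((real N * f x ^ (N - 1) * f') * f x ^ l - f x ^ N * (real l * f x ^ (l - 1) * f')) / (f x ^ l * f x ^ l)) (at x)"
    using assms by (auto intro!: derivative_eq_intros)
  moreover have "((real N * f x ^ (N - 1) * f') * f x ^ l - f x ^ N * (real l * f x ^ (l - 1) * f')) / (f x ^ l * f x ^ l)
     = (real N - real l) * Qf N l (f x) / f x * f'"
  proof -
    have a: "real N * f x ^ (N - 1) = real N * f x ^ N / f x" using assms(2) by (cases N) auto
    have b: "real l * f x ^ (l - 1) = real l * f x ^ l / f x" using assms(2) by (cases l) auto
    have p: "f x ^ l > 0" using assms(2) by simp
    show ?thesis unfolding Qf_def a b using assms(2) p
      by (simp add: divide_simps) (simp add: algebra_simps)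
  qed
  ultimately show ?thesis unfolding Qf_def by simp
qed

lemma sq_pos3: "a^2+b^2+c^2 > (0::real)" if "b^2 + c^2 > 0"
  proof - have "a^2 \<ge> 0" by simp then show ?thesis using that by linarith qed
lemma rr_pos: "b^2 + c^2 > 0 \<Longrightarrow> rr a b c > 0"
  unfolding rr_def using sq_pos3 by simp

lemma sqrt_chain:
  assumes "(g has_real_derivative g') (at x)" "g x > 0"
  shows "((\<lambda>t. sqrt (g t)) has_real_derivative g' / (2 * sqrt (g x))) (at x)"
proof -
  have eq: "inverse (sqrt (g x)) / 2 * g' = g' / (2 * sqrt (g x))" by (simp add: field_simps)
  show ?thesis
    using DERIV_chain2[OF DERIV_real_sqrt[OF assms(2)] assms(1)] unfolding eq .
qed

lemma rr_d0: "b^2+c^2 > 0 \<Longrightarrow> ((\<lambda>t. rr t b c) has_real_derivative a / rr a b c) (at a)"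
proof -
  assume p: "b^2+c^2 > 0"
  have "((\<lambda>t. t^2+b^2+c^2) has_real_derivative 2*a) (at a)" by (auto intro!: derivative_eq_intros)
  from sqrt_chain[OF this] sq_pos3[OF p] show ?thesis unfolding rr_def by simp
qed
lemma rr_d1: "a^2+b^2+c^2 > 0 \<Longrightarrow> ((\<lambda>t. rr a t c) has_real_derivative b / rr a b c) (at b)"
proof -
  assume p: "a^2+b^2+c^2 > 0"
  have "((\<lambda>t. a^2+t^2+c^2) has_real_derivative 2*b) (at b)" by (auto intro!: derivative_eq_intros)
  from sqrt_chain[OF this] p show ?thesis unfolding rr_def by simp
qed
lemma rr_d2: "a^2+b^2+c^2 > 0 \<Longrightarrow> ((\<lambda>t. rr a b t) has_real_derivative c / rr a b c) (at c)"
proof -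
  assume p: "a^2+b^2+c^2 > 0"
  have "((\<lambda>t. a^2+b^2+t^2) has_real_derivative 2*c) (at c)" by (auto intro!: derivative_eq_intros)
  from sqrt_chain[OF this] p show ?thesis unfolding rr_def by simp
qed



lemma Wf_d0:
  assumes p: "b^2+c^2 > 0"
  shows "((\<lambda>t. Wf N l t b c) has_real_derivative Af N l a b c) (at a)"
proof -
  define r where "r = rr a b c"
  have rp: "r > 0" using rr_pos[OF p] r_def by simp
  have r2: "r^2 = a^2+b^2+c^2" unfolding r_def rr_def using sq_pos3[OF p] by simp
  have dr: "((\<lambda>t. rr t b c) has_real_derivative a / r) (at a)" using rr_d0[OF p] r_def by simp
  have q: "((\<lambda>t. Qf N l (rr t b c)) has_real_derivative (real N - real l) * Qf N l r / r * (a / r)) (at a)"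
    using Qf_deriv[OF dr, of N l] rp r_def by simp
  have t: "((\<lambda>t. t / rr t b c) has_real_derivative (1 * r - a * (a / r)) / (r * r)) (at a)"
    using DERIV_divide[OF DERIV_ident dr] rp r_def by simp
  have pl: "((\<lambda>t. PL N l (t / rr t b c)) has_real_derivative (1 * r - a * (a / r)) / (r * r) * PL N (Suc l) (a / r)) (at a)"
    using PL_deriv[OF t] r_def by simp
  have d: "((\<lambda>t. Wf N l t b c) has_real_derivative
     (real N - real l) * Qf N l r / r * (a / r) * PL N l (a / r) + (1 * r - a * (a / r)) / (r * r) * PL N (Suc l) (a / r) * Qf N l r) (at a)"
    using DERIV_mult[OF q pl] unfolding Wf_def r_def .
  have "(real N - real l) * Qf N l r / r * (a / r) * PL N l (a / r) + (1 * r - a * (a / r)) / (r * r) * PL N (Suc l) (a / r) * Qf N l r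
     = Af N l a b c"
    unfolding Af_def Let_def r_def[symmetric] using rp by (simp add: field_simps power2_eq_square)
  with d show ?thesis by simp
qed

lemma Wf_d1:
  assumes p: "a^2+b^2+c^2 > 0"
  shows "((\<lambda>t. Wf N l a t c) has_real_derivative b * Bf N l a b c) (at b)"
proof -
  define r where "r = rr a b c"
  have rp: "r > 0" using p r_def rr_def by simp
  have dr: "((\<lambda>t. rr a t c) has_real_derivative b / r) (at b)" using rr_d1[OF p] r_def by simp
  have q: "((\<lambda>t. Qf N l (rr a t c)) has_real_derivative (real N - real l) * Qf N l r / r * (b / r)) (at b)"
    using Qf_deriv[OF dr, of N l] rp r_def by simp
  have t: "((\<lambda>t. a / rr a t c) has_real_derivative - (a * (b / r)) / (r * r)) (at b)"
    using DERIV_divide[OF DERIV_const dr, of a] rp r_def by simp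
  have pl: "((\<lambda>t. PL N l (a / rr a t c)) has_real_derivative - (a * (b / r)) / (r * r) * PL N (Suc l) (a / r)) (at b)"
    using PL_deriv[OF t] r_def by simp
  have d: "((\<lambda>t. Wf N l a t c) has_real_derivative
     (real N - real l) * Qf N l r / r * (b / r) * PL N l (a / r) + - (a * (b / r)) / (r * r) * PL N (Suc l) (a / r) * Qf N l r) (at b)"
    using DERIV_mult[OF q pl] unfolding Wf_def r_def .
  have "(real N - real l) * Qf N l r / r * (b / r) * PL N l (a / r) + - (a * (b / r)) / (r * r) * PL N (Suc l) (a / r) * Qf N l r
     = b * Bf N l a b c"
    unfolding Bf_def Let_def r_def[symmetric] using rp by (simp add: field_simps power2_eq_square)
  with d show ?thesis by simp
qed

lemma Wf_d2:
  assumes p: "a^2+b^2+c^2 > 0"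
  shows "((\<lambda>t. Wf N l a b t) has_real_derivative c * Bf N l a b c) (at c)"
proof -
  define r where "r = rr a b c"
  have rp: "r > 0" using p r_def rr_def by simp
  have dr: "((\<lambda>t. rr a b t) has_real_derivative c / r) (at c)" using rr_d2[OF p] r_def by simp
  have q: "((\<lambda>t. Qf N l (rr a b t)) has_real_derivative (real N - real l) * Qf N l r / r * (c / r)) (at c)"
    using Qf_deriv[OF dr, of N l] rp r_def by simp
  have t: "((\<lambda>t. a / rr a b t) has_real_derivative - (a * (c / r)) / (r * r)) (at c)"
    using DERIV_divide[OF DERIV_const dr, of a] rp r_def by simp
  have pl: "((\<lambda>t. PL N l (a / rr a b t)) has_real_derivative - (a * (c / r)) / (r * r) * PL N (Suc l) (a / r)) (at c)"
    using PL_deriv[OF t] r_def by simp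
  have d: "((\<lambda>t. Wf N l a b t) has_real_derivative
     (real N - real l) * Qf N l r / r * (c / r) * PL N l (a / r) + - (a * (c / r)) / (r * r) * PL N (Suc l) (a / r) * Qf N l r) (at c)"
    using DERIV_mult[OF q pl] unfolding Wf_def r_def .
  have "(real N - real l) * Qf N l r / r * (c / r) * PL N l (a / r) + - (a * (c / r)) / (r * r) * PL N (Suc l) (a / r) * Qf N l r
     = c * Bf N l a b c"
    unfolding Bf_def Let_def r_def[symmetric] using rp by (simp add: field_simps power2_eq_square)
  with d show ?thesis by simp
qed



lemma deriv_open_eq:
  assumes "(g has_real_derivative D) (at x)" "open S" "x \<in> S" "\<And>t. t \<in> S \<Longrightarrow> g t = f t"
  shows "deriv f x = D"
  using has_field_derivative_transform_within_open[OF assms] DERIV_imp_deriv by blast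

lemma open_sq: "open {t::real. t^2 + c^2 > 0}"
  by (intro open_Collect_less) (auto intro!: continuous_intros)
lemma open_sq': "open {t::real. b^2 + t^2 > 0}"
  by (intro open_Collect_less) (auto intro!: continuous_intros)

lemma sqrt_one_minus:
  assumes p: "b^2+c^2 > 0"
  shows "sqrt (1 - (a / rr a b c)^2) = sqrt (b^2+c^2) / rr a b c"
proof -
  have rp: "rr a b c > 0" using rr_pos[OF p] .
  have r2: "(rr a b c)^2 = a^2+b^2+c^2" unfolding rr_def using sq_pos3[OF p] by simp
  have "1 - (a / rr a b c)^2 = (b^2+c^2) / (rr a b c)^2" using rp r2 sq_pos3[OF p, of a] by (simp add: field_simps)
  then show ?thesis using rp by (simp add: real_sqrt_divide)
qed

lemma fU_eq:
  assumes p: "b^2+c^2 > 0"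
  shows "sph_r (a,b,c) ^ N * harmU l N (a,b,c) = Wf N l a b c * Cf l b c"
proof -
  define r where "r = rr a b c"
  define \<rho> where "\<rho> = sqrt (b^2+c^2)"
  have rp: "r > 0" using rr_pos[OF p] r_def by simp
  have \<rho>p: "\<rho> > 0" using p \<rho>_def by simp
  have "sph_r (a,b,c) ^ N * harmU l N (a,b,c) = r^N * ((\<rho>/r)^l * PL N l (a/r) * chebT l (b/\<rho>))"
    unfolding harmU_def assoc_legendre_def cos_th1_def cos_th2_def sph_rho_def
    using sqrt_one_minus[OF p, of a] by (simp add: r_def \<rho>_def rr_def sph_r_def PL_def)
  also have "\<dots> = r^N / r^l * PL N l (a/r) * (\<rho>^l * chebT l (b/\<rho>))"
    using rp by (simp add: power_divide)
  also have "\<dots> = Wf N l a b c * Cf l b c"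
    using chebT_Cf[of b c l] \<rho>p unfolding Wf_def Qf_def r_def \<rho>_def by simp
  finally show ?thesis .
qed

lemma fV_eq:
  assumes p: "b^2+c^2 > 0"
  shows "sph_r (a,b,c) ^ N * harmV (Suc l) N (a,b,c) = Wf N (Suc l) a b c * Sf (Suc l) b c"
proof -
  define r where "r = rr a b c"
  define \<rho> where "\<rho> = sqrt (b^2+c^2)"
  have rp: "r > 0" using rr_pos[OF p] r_def by simp
  have \<rho>p: "\<rho> > 0" using p \<rho>_def by simp
  have "sph_r (a,b,c) ^ N * harmV (Suc l) N (a,b,c) = r^N * ((\<rho>/r)^Suc l * PL N (Suc l) (a/r) * (c/\<rho>) * chebU l (b/\<rho>))"
    unfolding harmV_def assoc_legendre_def cos_th1_def cos_th2_def sin_th2_def sph_rho_def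
    using sqrt_one_minus[OF p, of a] by (simp add: r_def \<rho>_def rr_def sph_r_def PL_def)
  also have "\<dots> = r^N / r^Suc l * PL N (Suc l) (a/r) * (\<rho>^Suc l * (c/\<rho>) * chebU l (b/\<rho>))"
    using rp by (simp add: power_divide)
  also have "\<dots> = Wf N (Suc l) a b c * Sf (Suc l) b c"
    using chebU_Sf[of b c l] \<rho>p unfolding Wf_def Qf_def r_def \<rho>_def by simp
  finally show ?thesis .
qed



lemma pdU0:
  assumes p: "b^2+c^2 > 0"
  shows "pd0 (\<lambda>y. sph_r y ^ N * harmU l N y) (a,b,c) = Af N l a b c * Cf l b c"
proof -
  have "(\<lambda>t. sph_r (t,b,c) ^ N * harmU l N (t,b,c)) = (\<lambda>t. Wf N l t b c * Cf l b c)"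
    using fU_eq[OF p] by auto
  moreover have "((\<lambda>t. Wf N l t b c * Cf l b c) has_real_derivative Af N l a b c * Cf l b c) (at a)"
    using DERIV_cmult_right[OF Wf_d0[OF p]] by simp
  ultimately show ?thesis unfolding pd0_def by (simp add: DERIV_imp_deriv)
qed

lemma pdV0:
  assumes p: "b^2+c^2 > 0"
  shows "pd0 (\<lambda>y. sph_r y ^ N * harmV (Suc l) N y) (a,b,c) = Af N (Suc l) a b c * Sf (Suc l) b c"
proof -
  have "(\<lambda>t. sph_r (t,b,c) ^ N * harmV (Suc l) N (t,b,c)) = (\<lambda>t. Wf N (Suc l) t b c * Sf (Suc l) b c)"
    using fV_eq[OF p] by auto
  moreover have "((\<lambda>t. Wf N (Suc l) t b c * Sf (Suc l) b c) has_real_derivative Af N (Suc l) a b c * Sf (Suc l) b c) (at a)"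
    using DERIV_cmult_right[OF Wf_d0[OF p]] by simp
  ultimately show ?thesis unfolding pd0_def by (simp add: DERIV_imp_deriv)
qed

lemma pdU1:
  assumes p: "b^2+c^2 > 0"
  shows "pd1 (\<lambda>y. sph_r y ^ N * harmU l N y) (a,b,c)
     = b * Bf N l a b c * Cf l b c + real l * Cf (l-1) b c * Wf N l a b c"
proof -
  have "((\<lambda>t. Wf N l a t c * Cf l t c) has_real_derivative (b * Bf N l a b c) * Cf l b c + (real l * Cf (l-1) b c) * Wf N l a b c) (at b)"
    using DERIV_mult[OF Wf_d1[OF sq_pos3[OF p]] conjunct1[OF Cf_Sf_deriv[where l=l and u=b and v=c]]] .
  then have "deriv (\<lambda>t. sph_r (a,t,c) ^ N * harmU l N (a,t,c)) b = (b * Bf N l a b c) * Cf l b c + (real l * Cf (l-1) b c) * Wf N l a b c"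
    by (rule deriv_open_eq[OF _ open_sq]) (use p fU_eq in auto)
  then show ?thesis unfolding pd1_def by simp
qed

lemma pdU2:
  assumes p: "b^2+c^2 > 0"
  shows "pd2 (\<lambda>y. sph_r y ^ N * harmU l N y) (a,b,c)
     = c * Bf N l a b c * Cf l b c + (- real l * Sf (l-1) b c) * Wf N l a b c"
proof -
  have "((\<lambda>t. Wf N l a b t * Cf l b t) has_real_derivative (c * Bf N l a b c) * Cf l b c + (- real l * Sf (l-1) b c) * Wf N l a b c) (at c)"
    using DERIV_mult[OF Wf_d2[OF sq_pos3[OF p]] conjunct1[OF conjunct2[OF conjunct2[OF Cf_Sf_deriv[where l=l and u=b and v=c]]]]] .
  then have "deriv (\<lambda>t. sph_r (a,b,t) ^ N * harmU l N (a,b,t)) c = (c * Bf N l a b c) * Cf l b c + (- real l * Sf (l-1) b c) * Wf N l a b c"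
    by (rule deriv_open_eq[OF _ open_sq']) (use p fU_eq in auto)
  then show ?thesis unfolding pd2_def by simp
qed

lemma pdV1:
  assumes p: "b^2+c^2 > 0"
  shows "pd1 (\<lambda>y. sph_r y ^ N * harmV (Suc l) N y) (a,b,c)
     = b * Bf N (Suc l) a b c * Sf (Suc l) b c + real (Suc l) * Sf l b c * Wf N (Suc l) a b c"
proof -
  have "((\<lambda>t. Wf N (Suc l) a t c * Sf (Suc l) t c) has_real_derivative (b * Bf N (Suc l) a b c) * Sf (Suc l) b c + (real (Suc l) * Sf (Suc l - 1) b c) * Wf N (Suc l) a b c) (at b)"
    using DERIV_mult[OF Wf_d1[OF sq_pos3[OF p]] conjunct1[OF conjunct2[OF Cf_Sf_deriv[where l="Suc l" and u=b and v=c]]]] .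
  then have "deriv (\<lambda>t. sph_r (a,t,c) ^ N * harmV (Suc l) N (a,t,c)) b = (b * Bf N (Suc l) a b c) * Sf (Suc l) b c + (real (Suc l) * Sf (Suc l - 1) b c) * Wf N (Suc l) a b c"
    by (rule deriv_open_eq[OF _ open_sq]) (use p fV_eq in auto)
  then show ?thesis unfolding pd1_def by simp
qed

lemma pdV2:
  assumes p: "b^2+c^2 > 0"
  shows "pd2 (\<lambda>y. sph_r y ^ N * harmV (Suc l) N y) (a,b,c)
     = c * Bf N (Suc l) a b c * Sf (Suc l) b c + real (Suc l) * Cf l b c * Wf N (Suc l) a b c"
proof -
  have "((\<lambda>t. Wf N (Suc l) a b t * Sf (Suc l) b t) has_real_derivative (c * Bf N (Suc l) a b c) * Sf (Suc l) b c + (real (Suc l) * Cf (Suc l - 1) b c) * Wf N (Suc l) a b c) (at c)"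
    using DERIV_mult[OF Wf_d2[OF sq_pos3[OF p]] conjunct2[OF conjunct2[OF conjunct2[OF Cf_Sf_deriv[where l="Suc l" and u=b and v=c]]]]] .
  then have "deriv (\<lambda>t. sph_r (a,b,t) ^ N * harmV (Suc l) N (a,b,t)) c = (c * Bf N (Suc l) a b c) * Sf (Suc l) b c + (real (Suc l) * Cf (Suc l - 1) b c) * Wf N (Suc l) a b c"
    by (rule deriv_open_eq[OF _ open_sq']) (use p fV_eq in auto)
  then show ?thesis unfolding pd2_def by simp
qed



lemma Qf_Suc: "r > 0 \<Longrightarrow> Qf N (Suc l) r = Qf N l r / r"
  unfolding Qf_def by simp

lemma I2:
  assumes p: "b^2+c^2 > 0"
  shows "Af N (Suc l) a b c = - (real N + real l + 1) * Bf N l a b c"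
proof -
  define r where "r = rr a b c"
  define t where "t = a / r"
  have rp: "r > 0" using rr_pos[OF p] r_def by simp
  define P0 P1 P2 where "P0 = PL N l t" and "P1 = PL N (Suc l) t" and "P2 = PL N (Suc (Suc l)) t"
  have E: "(1 - t^2) * P2 - 2 * (real l + 1) * t * P1 + (real N - real l) * (real N + real l + 1) * P0 = 0"
    using PL_ode[of t N l] unfolding P0_def P1_def P2_def by (simp add: numeral_2_eq_2)
  have X: "(real N - real (Suc l)) * t * P1 + (1 - t^2) * P2 = - (real N + real l + 1) * ((real N - real l) * P0 - t * P1)"
    using E by (simp add: algebra_simps)
  have "Af N (Suc l) a b c = Qf N l r / r / r * ((real N - real (Suc l)) * t * P1 + (1 - t^2) * P2)"
    unfolding Af_def Let_def r_def[symmetric] t_def[symmetric] P1_def P2_def using Qf_Suc[OF rp] by simp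
  also have "\<dots> = - (real N + real l + 1) * Bf N l a b c"
    unfolding X unfolding Bf_def Let_def r_def[symmetric] t_def[symmetric] P0_def P1_def
    by (simp add: power2_eq_square)
  finally show ?thesis .
qed

lemma I1:
  assumes p: "b^2+c^2 > 0"
  shows "(b^2+c^2) / 2 * Bf N (Suc l) a b c + real (Suc l) * Wf N (Suc l) a b c
       = (real N + real l + 1) / 2 * Af N l a b c"
proof -
  define r where "r = rr a b c"
  define t where "t = a / r"
  have rp: "r > 0" using rr_pos[OF p] r_def by simp
  have r2: "r^2 = a^2+b^2+c^2" unfolding r_def rr_def using sq_pos3[OF p] by simp
  have s: "b^2+c^2 = r^2 * (1 - t^2)"
  proof -
    have "r^2 * (1 - t^2) = r^2 - a^2" unfolding t_def using rp by (simp add: power_divide right_diff_distrib)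
    then show ?thesis using r2 by simp
  qed
  define P0 P1 P2 where "P0 = PL N l t" and "P1 = PL N (Suc l) t" and "P2 = PL N (Suc (Suc l)) t"
  have E: "(1 - t^2) * P2 - 2 * (real l + 1) * t * P1 + (real N - real l) * (real N + real l + 1) * P0 = 0"
    using PL_ode[of t N l] unfolding P0_def P1_def P2_def by (simp add: numeral_2_eq_2)
  have X: "(1 - t^2) * ((real N - real (Suc l)) * P1 - t * P2) + 2 * real (Suc l) * P1
     = (real N + real l + 1) * ((real N - real l) * t * P0 + (1 - t^2) * P1)"
  proof -
    have "(1 - t^2) * ((real N - real (Suc l)) * P1 - t * P2) + 2 * real (Suc l) * P1
       - (real N + real l + 1) * ((real N - real l) * t * P0 + (1 - t^2) * P1)
       = - t * ((1 - t^2) * P2 - 2 * (real l + 1) * t * P1 + (real N - real l) * (real N + real l + 1) * P0)"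
      by (simp add: algebra_simps power2_eq_square)
    then show ?thesis using E by simp
  qed
  have "(b^2+c^2) / 2 * Bf N (Suc l) a b c + real (Suc l) * Wf N (Suc l) a b c
     = Qf N l r / r / 2 * ((1 - t^2) * ((real N - real (Suc l)) * P1 - t * P2) + 2 * real (Suc l) * P1)"
    unfolding s Bf_def Wf_def Let_def r_def[symmetric] t_def[symmetric] P1_def P2_def Qf_Suc[OF rp] using rp
    by (simp add: field_simps power2_eq_square)
  also have "\<dots> = (real N + real l + 1) / 2 * Af N l a b c"
    unfolding X unfolding Af_def Let_def r_def[symmetric] t_def[symmetric] P0_def P1_def
    by (simp add: field_simps)
  finally show ?thesis .
qed



definition XQ :: "nat \<Rightarrow> nat \<Rightarrow> real \<Rightarrow> real \<Rightarrow> real \<Rightarrow> quat" where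
  "XQ N l a b c = Quat (Af N l a b c * Cf l b c / 2)
     (- (b * Bf N l a b c * Cf l b c + real l * Cf (l-1) b c * Wf N l a b c) / 2)
     (- (c * Bf N l a b c * Cf l b c + (- real l * Sf (l-1) b c) * Wf N l a b c) / 2) 0"
definition YQ :: "nat \<Rightarrow> nat \<Rightarrow> real \<Rightarrow> real \<Rightarrow> real \<Rightarrow> quat" where
  "YQ N l a b c = Quat (Af N l a b c * Sf l b c / 2)
     (- (b * Bf N l a b c * Sf l b c + real l * Sf (l-1) b c * Wf N l a b c) / 2)
     (- (c * Bf N l a b c * Sf l b c + real l * Cf (l-1) b c * Wf N l a b c) / 2) 0"

lemmas quat_defs = times_quat_def plus_quat_def minus_quat_def uminus_quat_def zero_quat_def one_quat_def qreal_def e1_def e2_def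

lemma big_zero:
  assumes "l > N"
  shows "Af N l a b c = 0" "Bf N l a b c = 0" "Wf N l a b c = 0"
  using PL_zero[of N l] PL_zero[of N "Suc l"] assms
  by (simp_all add: Af_def Bf_def Wf_def Let_def)

lemma XQ_eq:
  assumes p: "b^2+c^2 > 0" and l: "l \<le> n + 2"
  shows "Xc l n (a,b,c) = XQ (n+1) l a b c"
proof (cases "l \<le> n + 1")
  case True
  then show ?thesis unfolding Xc_def Xdag_def Dbar_def
      pdU0[OF p, of "n+1"] pdU1[OF p, of "n+1"] pdU2[OF p, of "n+1"]
    by (simp add: XQ_def quat_defs algebra_simps)
next
  case False
  then have "l = n + 2" using l by simp
  then show ?thesis unfolding Xc_def XQ_def using big_zero[of "n+1" l a b c]
    by (simp add: quat_defs)
qed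

lemma YQ_eq:
  assumes p: "b^2+c^2 > 0" and l: "l \<le> n + 2"
  shows "Yc l n (a,b,c) = YQ (n+1) l a b c"
proof (cases "1 \<le> l \<and> l \<le> n + 1")
  case True
  then obtain k where k: "l = Suc k" by (cases l) auto
  show ?thesis using True unfolding Yc_def Ydag_def Dbar_def k
      pdV0[OF p, of "n+1"] pdV1[OF p, of "n+1"] pdV2[OF p, of "n+1"]
    by (simp add: YQ_def quat_defs algebra_simps)
next
  case False
  then have "l = 0 \<or> l = n + 2" using l by auto
  then show ?thesis
  proof
    assume "l = 0" then show ?thesis unfolding Yc_def YQ_def by (simp add: quat_defs)
  next
    assume "l = n + 2" then show ?thesis unfolding Yc_def YQ_def using big_zero[of "n+1" l a b c]
      by (simp add: quat_defs)
  qed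
qed



lemma XY_abstract:
  fixes b c kk kk1 kk2 M1 iM Ak Bk Wk A1 B1 W1 A2 B2 W2 Ck Sk Ckm Skm C1 S1 C1m S1m C2 S2 C2m S2m s :: real
  assumes s: "s = b^2 + c^2"
  assumes h1: "A1 = - M1 * Bk" and h2: "A2 = - (M1 + 1) * B1" and h3: "s * B1 + 2 * (kk+1) * W1 = M1 * Ak"
    and h4: "s * B2 + 2 * (kk+2) * W2 = (M1 + 1) * A1"
    and iM: "2 * (M1 + 1) * iM = 1"
    and c1: "C1 = b * Ck - c * Sk" and s1: "S1 = b * Sk + c * Ck"
    and c2: "C2 = b * C1 - c * S1" and s2: "S2 = b * S1 + c * C1"
    and m1: "C1m = Ck" "S1m = Sk" and m2: "C2m = C1" "S2m = S1"
    and k1: "kk1 = kk + 1" and k2: "kk2 = kk + 2"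
  shows "Quat (A1 * C1 / 2) (- (b * B1 * C1 + kk1 * C1m * W1) / 2) (- (c * B1 * C1 + (- kk1 * S1m) * W1) / 2) 0
     = qreal (- M1 / 2) * (Quat (Ak * Ck / 2) (- (b * Bk * Ck + kk * Ckm * Wk) / 2) (- (c * Bk * Ck + (- kk * Skm) * Wk) / 2) 0 * e1
                          - Quat (Ak * Sk / 2) (- (b * Bk * Sk + kk * Skm * Wk) / 2) (- (c * Bk * Sk + kk * Ckm * Wk) / 2) 0 * e2)
     + qreal iM * (Quat (A2 * C2 / 2) (- (b * B2 * C2 + kk2 * C2m * W2) / 2) (- (c * B2 * C2 + (- kk2 * S2m) * W2) / 2) 0 * e1
                  + Quat (A2 * S2 / 2) (- (b * B2 * S2 + kk2 * S2m * W2) / 2) (- (c * B2 * S2 + kk2 * C2m * W2) / 2) 0 * e2)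
   \<and> Quat (A1 * S1 / 2) (- (b * B1 * S1 + kk1 * S1m * W1) / 2) (- (c * B1 * S1 + kk1 * C1m * W1) / 2) 0
     = qreal (- M1 / 2) * (Quat (Ak * Sk / 2) (- (b * Bk * Sk + kk * Skm * Wk) / 2) (- (c * Bk * Sk + kk * Ckm * Wk) / 2) 0 * e1
                          + Quat (Ak * Ck / 2) (- (b * Bk * Ck + kk * Ckm * Wk) / 2) (- (c * Bk * Ck + (- kk * Skm) * Wk) / 2) 0 * e2)
     + qreal iM * (Quat (A2 * S2 / 2) (- (b * B2 * S2 + kk2 * S2m * W2) / 2) (- (c * B2 * S2 + kk2 * C2m * W2) / 2) 0 * e1
                  - Quat (A2 * C2 / 2) (- (b * B2 * C2 + kk2 * C2m * W2) / 2) (- (c * B2 * C2 + (- kk2 * S2m) * W2) / 2) 0 * e2)"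
  apply (simp add: quat_defs)
  apply (intro conjI)
  using assms by algebra+


lemma X0_abstract:
  fixes b c kk0 kk1 M1 iM A0 B0 W0 A1 B1 W1 C0 S0 C0m S0m C1 S1 C1m S1m s :: real
  assumes s: "s = b^2 + c^2"
  assumes h1: "A1 = - M1 * B0" and h3: "s * B1 + 2 * W1 = M1 * A0"
    and iM: "M1 * iM = 1"
    and c0: "C0 = 1" "S0 = 0" "kk0 = 0"
    and c1: "C1 = b * C0 - c * S0" and s1: "S1 = b * S0 + c * C0"
    and m1: "C1m = C0" "S1m = S0" and k1: "kk1 = 1"
  shows "Quat (A0 * C0 / 2) (- (b * B0 * C0 + kk0 * C0m * W0) / 2) (- (c * B0 * C0 + (- kk0 * S0m) * W0) / 2) 0
     = qreal iM * (Quat (A1 * C1 / 2) (- (b * B1 * C1 + kk1 * C1m * W1) / 2) (- (c * B1 * C1 + (- kk1 * S1m) * W1) / 2) 0 * e1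
                  + Quat (A1 * S1 / 2) (- (b * B1 * S1 + kk1 * S1m * W1) / 2) (- (c * B1 * S1 + kk1 * C1m * W1) / 2) 0 * e2)"
  apply (simp add: quat_defs)
  apply (intro conjI)
  using assms by algebra+

lemma I1':
  assumes p: "b^2+c^2 > 0"
  shows "(b^2+c^2) * Bf N (Suc l) a b c + 2 * (real l + 1) * Wf N (Suc l) a b c = (real N + real l + 1) * Af N l a b c"
  using I1[OF p, where N=N and l=l and a=a] by (simp add: field_simps)

lemma main_m:
  assumes p: "b^2+c^2 > 0" and k: "k \<le> n"
  shows "XQ (n+1) (Suc k) a b c = qreal (- (real n + real (Suc k) + 1) / 2) * (XQ (n+1) k a b c * e1 - YQ (n+1) k a b c * e2)
                    + qreal (1 / (2 * (real n + real (Suc k) + 2))) * (XQ (n+1) (Suc k+1) a b c * e1 + YQ (n+1) (Suc k+1) a b c * e2)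
       \<and> YQ (n+1) (Suc k) a b c = qreal (- (real n + real (Suc k) + 1) / 2) * (YQ (n+1) k a b c * e1 + XQ (n+1) k a b c * e2)
                    + qreal (1 / (2 * (real n + real (Suc k) + 2))) * (YQ (n+1) (Suc k+1) a b c * e1 - XQ (n+1) (Suc k+1) a b c * e2)"
  unfolding XQ_def YQ_def
  apply (rule XY_abstract[where s="b^2+c^2"])
  using I2[OF p, where N="n+1" and l=k and a=a] I2[OF p, where N="n+1" and l="Suc k" and a=a]
    I1'[OF p, where N="n+1" and l=k and a=a] I1'[OF p, where N="n+1" and l="Suc k" and a=a]
  by (simp_all add: Cf_Suc Sf_Suc algebra_simps)

lemma main_0:
  assumes p: "b^2+c^2 > 0"
  shows "XQ (n+1) 0 a b c = qreal (1 / (real n + 2)) * (XQ (n+1) 1 a b c * e1 + YQ (n+1) 1 a b c * e2)"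
  unfolding XQ_def YQ_def
  apply (rule X0_abstract[where s="b^2+c^2"])
  using I2[OF p, where N="n+1" and l=0 and a=a] I1'[OF p, where N="n+1" and l=0 and a=a]
  by (simp_all add: Cf_Suc Sf_Suc algebra_simps)



lemma legendre1: "legendre 1 = [:0, 1:]"
  unfolding legendre_def by (simp add: pderiv_pCons)

lemma legendre1': "legendre (Suc 0) = [:0, 1:]" using legendre1 by simp

lemma PL1: "PL (Suc 0) 0 t = t" "PL (Suc 0) (Suc 0) t = 1" "PL (Suc 0) 2 t = 0"
proof -
  show "PL (Suc 0) 0 t = t" "PL (Suc 0) (Suc 0) t = 1" by (simp_all add: PL_def legendre1' pderiv_pCons)
  show "PL (Suc 0) 2 t = 0" by (rule PL_zero) simp
qed

lemma N1_vals:
  assumes p: "b^2+c^2 > 0"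
  shows "Af 1 0 a b c = 1" "Bf 1 0 a b c = 0" "Af 1 1 a b c = 0" "Bf 1 1 a b c = 0" "Wf 1 1 a b c = 1"
proof -
  have rp: "rr a b c > 0" using rr_pos[OF p] .
  show "Af 1 0 a b c = 1" using rp by (simp add: Af_def Let_def PL1 Qf_def field_simps power2_eq_square)
  show "Bf 1 0 a b c = 0" using rp by (simp add: Bf_def Let_def PL1 Qf_def)
  show "Af 1 1 a b c = 0" using rp PL1(3) by (simp add: Af_def Let_def PL1 Qf_def numeral_2_eq_2)
  show "Bf 1 1 a b c = 0" using rp PL1(3) by (simp add: Bf_def Let_def PL1 Qf_def numeral_2_eq_2)
  show "Wf 1 1 a b c = 1" using rp by (simp add: Wf_def PL1 Qf_def)
qed

theorem proposition2:
  fixes n :: nat and x :: pt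
  assumes "sph_rho x > 0"
  shows "Xc 0 n x = qreal (1 / (real n + 2)) * (Xc 1 n x * e1 + Yc 1 n x * e2)
    \<and> (\<forall>m\<in>{1..n+1}.
         Xc m n x = qreal (- (real n + real m + 1) / 2) * (Xc (m-1) n x * e1 - Yc (m-1) n x * e2)
                    + qreal (1 / (2 * (real n + real m + 2))) * (Xc (m+1) n x * e1 + Yc (m+1) n x * e2)
       \<and> Yc m n x = qreal (- (real n + real m + 1) / 2) * (Yc (m-1) n x * e1 + Xc (m-1) n x * e2)
                    + qreal (1 / (2 * (real n + real m + 2))) * (Yc (m+1) n x * e1 - Xc (m+1) n x * e2))
    \<and> Xc 0 0 x = qreal (1/2) \<and> Xc 1 0 x * e1 = qreal (1/2) \<and> Yc 1 0 x * e2 = qreal (1/2)"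
proof -
  obtain a b c where x: "x = (a, b, c)" by (cases x) auto
  have p: "b^2 + c^2 > 0" using assms unfolding x sph_rho_def by simp
  have A: "Xc 0 n x = qreal (1 / (real n + 2)) * (Xc 1 n x * e1 + Yc 1 n x * e2)"
    unfolding x
    using main_0[OF p, of n a] by (simp add: XQ_eq[OF p] YQ_eq[OF p])
  have B: "\<forall>m\<in>{1..n+1}.
         Xc m n x = qreal (- (real n + real m + 1) / 2) * (Xc (m-1) n x * e1 - Yc (m-1) n x * e2)
                    + qreal (1 / (2 * (real n + real m + 2))) * (Xc (m+1) n x * e1 + Yc (m+1) n x * e2)
       \<and> Yc m n x = qreal (- (real n + real m + 1) / 2) * (Yc (m-1) n x * e1 + Xc (m-1) n x * e2)
                    + qreal (1 / (2 * (real n + real m + 2))) * (Yc (m+1) n x * e1 - Xc (m+1) n x * e2)"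
  proof
    fix m assume m: "m \<in> {1..n+1}"
    then obtain k where k: "m = Suc k" and kn: "k \<le> n" by (cases m) auto
    have e: "Suc k - 1 = k" by simp
    show "Xc m n x = qreal (- (real n + real m + 1) / 2) * (Xc (m-1) n x * e1 - Yc (m-1) n x * e2)
                    + qreal (1 / (2 * (real n + real m + 2))) * (Xc (m+1) n x * e1 + Yc (m+1) n x * e2)
       \<and> Yc m n x = qreal (- (real n + real m + 1) / 2) * (Yc (m-1) n x * e1 + Xc (m-1) n x * e2)
                    + qreal (1 / (2 * (real n + real m + 2))) * (Yc (m+1) n x * e1 - Xc (m+1) n x * e2)"
      unfolding x k e
      using kn main_m[OF p kn, of a]
      by (simp add: XQ_eq[OF p] YQ_eq[OF p])
  qed
  have C: "Xc 0 0 x = qreal (1/2) \<and> Xc 1 0 x * e1 = qreal (1/2) \<and> Yc 1 0 x * e2 = qreal (1/2)"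
    unfolding x
    using N1_vals[OF p, of a]
    by (simp add: XQ_eq[OF p] YQ_eq[OF p] XQ_def YQ_def quat_defs)
  show ?thesis using A B C by blast
qed


end
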